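(* Let $S,I:\mathbb{R}\to\mathbb{R}$ be $2\pi$-periodic Lipschitz functions and suppose there are $\alpha_0\in(0,\pi)$, $p,q\ge1$, $c_1,c_2>0$, $c_3\in(0,1]$ with \[ S(\theta)\le-c_1(\pi-\theta)^p\ \ (\theta\in[\alpha_0,\pi]),\qquad S(\theta)\ge c_1(\theta+\pi)^p\ \ (\theta\in[-\pi,-\alpha_0]), \] \[ 0\le I(\theta)\le c_2(\pi-|\theta|)^q\ \ (\theta\in[-\pi,\pi]),\qquad \min_{|\phi|\le\max\{|\theta|,\alpha_0\}}I(\phi)\ge c_3I(\theta)\ \ (\theta\in[-\pi,\pi]). \] Let $(\theta_i(t))$ solve \[ \dot\theta_i=\omega_i+\frac{\kappa}{N}\sum_{j=1}^NI(\theta_j)S(\theta_i),\qquad\theta_i(0)=\theta_i^0,\quad i=1,\dots,N, \] let $R(t)=\frac1N\sum_jI(\theta_j(t))$, $R_0=R(0)$, $\|\Omega\|_\infty=\max_i|\omega_i|$. Suppose $R_0>0$ and \[ \kappa>\max\left\{\frac{2(2c_2)^{p/q}}{c_1c_3}\cdot\frac{\|\Omega\|_\infty}{R_0^{1+p/q}},\ \frac{2}{c_1c_3(\pi-\alpha_0)^p}\cdot\frac{\|\Omega\|_\infty}{R_0}\right\}. \] Then (a) $R(t)>\frac{c_3R_0}{2}$ for all $t\ge0$, and (b) $\sup_{t\ge0}\theta_i(t)-\inf_{t\ge0}\theta_i(t)<2\pi$ for all $i=1,\dots,N$.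
   Context: This is the general Winfree model with influence function $I$ and sensitivity function $S$; $R$ is the average influence. *)

theory Defs
  imports "HOL-Analysis.Analysis"
begin

end

theory Submission
  imports Defs
begin

lemma barrier_up:
  fixes \<phi> v :: "real \<Rightarrow> real"
  assumes der: "\<And>t. ta \<le> t \<Longrightarrow> (\<phi> has_real_derivative v t) (at t within {ta..})"
    and start: "\<phi> ta \<le> b"
    and cross: "\<And>t. ta \<le> t \<Longrightarrow> t < T \<Longrightarrow> \<phi> t = b \<Longrightarrow> v t < 0"
    and s: "ta \<le> s" "s \<le> T"
  shows "\<phi> s \<le> b"
proof (rule ccontr)
  assume "\<not> \<phi> s \<le> b"
  hence gt: "\<phi> s > b" by simp
  have cont: "continuous_on {ta..s} \<phi>"
    unfolding continuous_on_eq_continuous_within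
  proof
    fix t assume "t \<in> {ta..s}"
    hence "ta \<le> t" by auto
    hence "continuous (at t within {ta..}) \<phi>" by (rule DERIV_continuous[OF der])
    thus "continuous (at t within {ta..s}) \<phi>" by (rule continuous_within_subset) auto
  qed
  define A where "A = {ta..s} \<inter> \<phi> -` {..b}"
  have clA: "closed A" unfolding A_def
    by (rule continuous_closed_preimage[OF cont]) auto
  have taA: "ta \<in> A" using start s by (auto simp: A_def)
  have bdd: "bdd_above A" unfolding A_def by (rule bdd_above_mono[of "{ta..s}"]) auto
  define u where "u = Sup A"
  have uA: "u \<in> A" unfolding u_def using closed_contains_Sup[OF _ bdd clA] taA by blast
  hence u: "ta \<le> u" "u \<le> s" "\<phi> u \<le> b" by (auto simp: A_def)
  have us: "u < s" using u gt by (cases "u = s") auto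
  have above: "\<phi> t > b" if "u < t" "t \<le> s" for t
  proof (rule ccontr)
    assume "\<not> \<phi> t > b"
    hence "t \<in> A" using that u by (auto simp: A_def)
    hence "t \<le> u" unfolding u_def using bdd by (rule cSup_upper)
    thus False using that by simp
  qed
  have F: "at u within {u..s} = at_right u" using us by (rule at_within_Icc_at_right)
  have ev: "eventually (\<lambda>t. t \<in> {u<..<s}) (at u within {u..s})"
    unfolding F using us by (rule eventually_at_right_real)
  have nt: "\<not> trivial_limit (at u within {u..s})" unfolding F by simp
  have "(\<phi> \<longlongrightarrow> \<phi> u) (at u within {ta..s})" using cont u unfolding continuous_on_def by auto
  hence lim1: "(\<phi> \<longlongrightarrow> \<phi> u) (at u within {u..s})" by (rule tendsto_within_subset) (use u in auto)
  have "b \<le> \<phi> u"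
    by (rule tendsto_lowerbound[OF lim1 _ nt]) (rule eventually_mono[OF ev], auto intro!: less_imp_le above)
  hence eq: "\<phi> u = b" using u by simp
  hence neg: "v u < 0" using cross u us s by auto
  have "(\<phi> has_real_derivative v u) (at u within {u..s})"
    by (rule DERIV_subset[OF der]) (use u s in auto)
  hence lim2: "((\<lambda>y. (\<phi> y - \<phi> u) / (y - u)) \<longlongrightarrow> v u) (at u within {u..s})"
    by (simp add: has_field_derivative_iff)
  have q: "0 \<le> (\<phi> y - \<phi> u) / (y - u)" if "y \<in> {u<..<s}" for y
  proof -
    have "\<phi> y > \<phi> u" using above[of y] that eq by auto
    thus ?thesis using that by (intro divide_nonneg_pos) auto
  qed
  have "0 \<le> v u"
    by (rule tendsto_lowerbound[OF lim2 _ nt]) (rule eventually_mono[OF ev], rule q)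
  thus False using neg by simp
qed

lemma barrier_down:
  fixes \<phi> v :: "real \<Rightarrow> real"
  assumes der: "\<And>t. ta \<le> t \<Longrightarrow> (\<phi> has_real_derivative v t) (at t within {ta..})"
    and start: "\<phi> ta \<ge> b"
    and cross: "\<And>t. ta \<le> t \<Longrightarrow> t < T \<Longrightarrow> \<phi> t = b \<Longrightarrow> v t > 0"
    and s: "ta \<le> s" "s \<le> T"
  shows "\<phi> s \<ge> b"
proof -
  have "- \<phi> s \<le> - b"
    by (rule barrier_up[where \<phi>="\<lambda>t. - \<phi> t" and v="\<lambda>t. - v t" and T=T and ta=ta])
       (use der start cross s in \<open>auto intro: DERIV_minus\<close>)
  thus ?thesis by simp
qed

lemma per_nat:
  assumes "\<forall>x. f (x + 2*pi) = f x"
  shows "f (x + 2*pi*real n) = (f x :: real)"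
proof (induction n arbitrary: x)
  case 0 then show ?case by simp
next
  case (Suc n)
  have "f (x + 2*pi*real (Suc n)) = f ((x + 2*pi*real n) + 2*pi)" by (simp add: algebra_simps)
  also have "\<dots> = f (x + 2*pi*real n)" using assms by blast
  finally show ?case using Suc by simp
qed

lemma per_int:
  assumes "\<forall>x. f (x + 2*pi) = f x"
  shows "f (x + 2*pi * of_int k) = (f x :: real)"
proof (cases "k \<ge> 0")
  case True
  hence k: "of_int k = real (nat k)" by simp
  show ?thesis unfolding k by (rule per_nat[OF assms])
next
  case False
  define n where "n = nat (- k)"
  have k: "of_int k = - real n" using False by (simp add: n_def)
  have "f ((x - 2*pi*real n) + 2*pi*real n) = f (x - 2*pi*real n)" by (rule per_nat[OF assms])
  thus ?thesis unfolding k by simp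
qed

lemma reduce: "\<exists>k::int. x - 2*pi * of_int k \<in> {-pi<..pi}"
proof -
  define k where "k = \<lceil>(x - pi)/(2*pi)\<rceil>"
  have a: "of_int k - 1 < (x - pi)/(2*pi)" "(x - pi)/(2*pi) \<le> of_int k"
    unfolding k_def by linarith+
  have "(of_int k - 1) * (2*pi) < x - pi" using a(1) by (simp add: field_simps)
  moreover have "x - pi \<le> of_int k * (2*pi)" using a(2) by (simp add: field_simps)
  ultimately show ?thesis by (intro exI[of _ k]) (auto simp: algebra_simps)
qed

lemma choose_x:
  fixes K m M p :: real
  assumes "K > 0" "m > 0" "K * m powr p > M" "M \<ge> 0" "p > 0"
  shows "\<exists>x. 0 < x \<and> x < m \<and> K * x powr p > M"
proof -
  have mp: "m powr p > 0" using assms(2) by simp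
  have Km: "K * m powr p > 0" using assms(1) mp by (rule mult_pos_pos)
  define r where "r = M / (K * m powr p)"
  have r0: "0 \<le> r" unfolding r_def using assms(4) Km by (rule divide_nonneg_pos)
  have r1: "r < 1" unfolding r_def using assms(3) Km by (simp add: pos_divide_less_eq)
  define l where "l = ((1 + r) / 2) powr (1/p)"
  have l0: "0 < l" using r0 by (simp add: l_def)
  have "((1 + r) / 2) powr (1/p) < 1 powr (1/p)"
    by (rule powr_less_mono2) (use r0 r1 assms(5) in auto)
  hence l1: "l < 1" by (simp add: l_def)
  have "l powr p = ((1 + r) / 2) powr (1/p * p)" unfolding l_def by (rule powr_powr)
  also have "1/p * p = 1" using assms(5) by simp
  also have "((1 + r) / 2) powr 1 = (1 + r) / 2" using r0 by simp
  finally have lp: "l powr p = (1 + r) / 2" .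
  have "(l * m) powr p = l powr p * m powr p" using l0 assms(2) by (simp add: powr_mult)
  hence "K * (l * m) powr p = K * m powr p * ((1 + r) / 2)" unfolding lp by (simp only: ac_simps)
  also have "\<dots> = (K * m powr p + K * m powr p * r) / 2" by (simp add: algebra_simps)
  also have "K * m powr p * r = M" unfolding r_def using Km assms(1,2) by simp
  finally have eq: "K * (l * m) powr p = (K * m powr p + M) / 2" .
  have "M < (K * m powr p + M) / 2" using assms(3) by simp
  hence "K * (l * m) powr p > M" unfolding eq .
  moreover have "l * m < m" using mult_strict_right_mono[OF l1 assms(2)] by simp
  moreover have "0 < l * m" using mult_pos_pos[OF l0 assms(2)] .
  ultimately show ?thesis by (intro exI[of _ "l * m"]) simp
qed

lemma range_conc:
  fixes f :: "real \<Rightarrow> real"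
  assumes "\<forall>t\<ge>0. f t \<in> {a..a+L}" "L < 2*pi"
  shows "bdd_above (f ` {0..}) \<and> bdd_below (f ` {0..})
    \<and> (SUP t\<in>{0..}. f t) - (INF t\<in>{0..}. f t) < 2 * pi"
proof -
  have ba: "bdd_above (f ` {0..})" using assms by (auto intro!: bdd_aboveI[of _ "a+L"])
  have bb: "bdd_below (f ` {0..})" using assms by (auto intro!: bdd_belowI[of _ "a"])
  have "(SUP t\<in>{0..}. f t) \<le> a + L" using assms by (intro cSUP_least) auto
  moreover have "(INF t\<in>{0..}. f t) \<ge> a" using assms by (intro cINF_greatest) auto
  ultimately show ?thesis using ba bb assms by linarith
qed



theorem theorem2p7:
  fixes S I :: "real \<Rightarrow> real"
    and \<omega> :: "'n::finite \<Rightarrow> real"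
    and \<theta> :: "'n \<Rightarrow> real \<Rightarrow> real"
    and \<alpha>0 p q c1 c2 c3 \<kappa> :: real
  assumes S_per: "\<forall>x. S (x + 2 * pi) = S x"
    and I_per: "\<forall>x. I (x + 2 * pi) = I x"
    and S_lip: "\<exists>L. L-lipschitz_on UNIV S"
    and I_lip: "\<exists>L. L-lipschitz_on UNIV I"
    and \<alpha>0: "0 < \<alpha>0" "\<alpha>0 < pi"
    and pq: "p \<ge> 1" "q \<ge> 1"
    and cs: "c1 > 0" "c2 > 0" "0 < c3" "c3 \<le> 1"
    and S_right: "\<forall>x\<in>{\<alpha>0..pi}. S x \<le> - c1 * (pi - x) powr p"
    and S_left: "\<forall>x\<in>{-pi..-\<alpha>0}. S x \<ge> c1 * (x + pi) powr p"
    and I_bounds: "\<forall>x\<in>{-pi..pi}. 0 \<le> I x \<and> I x \<le> c2 * (pi - \<bar>x\<bar>) powr q"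
    and I_min: "\<forall>x\<in>{-pi..pi}. \<forall>\<phi>. \<bar>\<phi>\<bar> \<le> max \<bar>x\<bar> \<alpha>0 \<longrightarrow> I \<phi> \<ge> c3 * I x"
    and ode: "\<forall>i. \<forall>t\<ge>0. ((\<theta> i) has_real_derivative
               (\<omega> i + \<kappa> / real CARD('n) * (\<Sum>j\<in>UNIV. I (\<theta> j t)) * S (\<theta> i t)))
               (at t within {0..})"
    and R0_pos: "(\<Sum>j\<in>UNIV. I (\<theta> j 0)) / real CARD('n) > 0"
    and \<kappa>_big: "\<kappa> > max
        (2 * (2 * c2) powr (p / q) / (c1 * c3) * Max (range (\<lambda>i. \<bar>\<omega> i\<bar>))
           / ((\<Sum>j\<in>UNIV. I (\<theta> j 0)) / real CARD('n)) powr (1 + p / q))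
        (2 / (c1 * c3 * (pi - \<alpha>0) powr p) * Max (range (\<lambda>i. \<bar>\<omega> i\<bar>))
           / ((\<Sum>j\<in>UNIV. I (\<theta> j 0)) / real CARD('n)))"
  shows "(\<forall>t\<ge>0. (\<Sum>j\<in>UNIV. I (\<theta> j t)) / real CARD('n)
                 > c3 * ((\<Sum>j\<in>UNIV. I (\<theta> j 0)) / real CARD('n)) / 2)
         \<and> (\<forall>i. bdd_above (\<theta> i ` {0..}) \<and> bdd_below (\<theta> i ` {0..})
              \<and> (SUP t\<in>{0..}. \<theta> i t) - (INF t\<in>{0..}. \<theta> i t) < 2 * pi)"
proof -
  define N where "N = real CARD('n)"
  have N: "N > 0" unfolding N_def by simp
  define R where "R t = (\<Sum>j\<in>UNIV. I (\<theta> j t)) / N" for t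
  define R0 where "R0 = R 0"
  define M where "M = Max (range (\<lambda>i. \<bar>\<omega> i\<bar>))"
  define V where "V i t = \<omega> i + \<kappa> / N * (\<Sum>j\<in>UNIV. I (\<theta> j t)) * S (\<theta> i t)" for i t
  have R0: "R0 > 0" using R0_pos by (simp add: R0_def R_def N_def)
  have \<omega>M: "\<bar>\<omega> i\<bar> \<le> M" for i unfolding M_def by (rule Max_ge) auto
  have M0: "M \<ge> 0" using \<omega>M[of undefined] by simp
  have R0eq: "(\<Sum>j\<in>UNIV. I (\<theta> j 0)) / real CARD('n) = R0" by (simp add: R0_def R_def N_def)
  have kb_both: "\<kappa> > 2 * (2 * c2) powr (p / q) / (c1 * c3) * M / R0 powr (1 + p / q)
      \<and> \<kappa> > 2 / (c1 * c3 * (pi - \<alpha>0) powr p) * M / R0"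
    using \<kappa>_big unfolding R0eq M_def[symmetric] max_less_iff_conj .
  have kb: "\<kappa> > 2 * (2 * c2) powr (p / q) / (c1 * c3) * M / R0 powr (1 + p / q)"
           "\<kappa> > 2 / (c1 * c3 * (pi - \<alpha>0) powr p) * M / R0"
    using kb_both by blast+
  have pa: "(pi - \<alpha>0) powr p > 0" using \<alpha>0 by simp
  have "2 / (c1 * c3 * (pi - \<alpha>0) powr p) \<ge> 0" using cs pa by simp
  hence "2 / (c1 * c3 * (pi - \<alpha>0) powr p) * M \<ge> 0" using M0 by (rule mult_nonneg_nonneg)
  hence "2 / (c1 * c3 * (pi - \<alpha>0) powr p) * M / R0 \<ge> 0" by (rule divide_nonneg_pos) (rule R0)
  hence \<kappa>: "\<kappa> > 0" using kb(2) by linarith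
  have der: "(\<theta> i has_real_derivative V i t) (at t within {0..})" if "t \<ge> 0" for i t
    unfolding V_def N_def by (rule ode[rule_format, OF that])
  have VR: "V i t = \<omega> i + \<kappa> * R t * S (\<theta> i t)" for i t
    unfolding V_def R_def by simp
  define K where "K = \<kappa> * c1 * c3 * R0 / 2"
  have K: "K > 0" using \<kappa> cs R0 by (simp add: K_def)
  have K1: "K * (pi - \<alpha>0) powr p > M"
  proof -
    have "2 / (c1 * c3 * (pi - \<alpha>0) powr p) * M / R0 = M / (c1 * c3 * (pi - \<alpha>0) powr p * R0 / 2)"
      by (simp add: field_simps)
    hence "M < \<kappa> * (c1 * c3 * (pi - \<alpha>0) powr p * R0 / 2)"
      using kb(2) cs pa R0 by (simp add: divide_less_eq)
    thus ?thesis by (simp add: K_def algebra_simps)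
  qed
  define x0 where "x0 = (R0 / (2 * c2)) powr (1 / q)"
  have x0: "x0 > 0" using R0 cs by (simp add: x0_def)
  have x0q: "x0 powr q = R0 / (2 * c2)" using R0 cs pq by (simp add: x0_def powr_powr)
  have x0p: "x0 powr p = R0 powr (p / q) / (2 * c2) powr (p / q)"
    using R0 cs pq by (simp add: x0_def powr_powr powr_divide)
  have K2: "K * x0 powr p > M"
  proof -
    have c2p: "(2 * c2) powr (p / q) > 0" using cs by simp
    have Rp: "R0 powr (1 + p / q) = R0 * R0 powr (p / q)" using R0 by (simp add: powr_add)
    have Rpp: "R0 powr (p / q) > 0" using R0 by simp
    have "2 * (2 * c2) powr (p / q) / (c1 * c3) * M / R0 powr (1 + p / q)
       = M / (c1 * c3 * R0 * R0 powr (p / q) / (2 * (2 * c2) powr (p / q)))"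
      using Rp by (simp add: field_simps)
    hence h: "M * (2 * (2 * c2) powr (p / q)) < \<kappa> * (c1 * c3 * R0 * R0 powr (p / q))"
      using kb(1) cs c2p R0 Rpp by (simp add: divide_less_eq)
    have "K * x0 powr p = \<kappa> * (c1 * c3 * R0 * R0 powr (p / q)) / (2 * (2 * c2) powr (p / q))"
      using x0p by (simp add: K_def)
    thus ?thesis using h c2p by (simp add: pos_less_divide_eq)
  qed
  define m0 where "m0 = min (pi - \<alpha>0) x0"
  have m0: "m0 > 0" using \<alpha>0 x0 by (simp add: m0_def)
  have Km0: "K * m0 powr p > M" using K1 K2 by (simp add: m0_def min_def)
  obtain x where x: "0 < x" "x < m0" "K * x powr p > M"
    using choose_x[OF K m0 Km0 M0] pq by auto
  define \<beta> where "\<beta> = pi - x"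
  have \<beta>: "\<alpha>0 < \<beta>" "\<beta> < pi" using x by (auto simp: \<beta>_def m0_def)
  have xq: "c2 * x powr q < R0 / 2"
  proof -
    have "x powr q < x0 powr q" using x pq by (intro powr_less_mono2) (auto simp: m0_def)
    thus ?thesis using x0q cs by (simp add: field_simps)
  qed
  have Xp: "x powr p > 0" using x by simp
  have Sneg: "S y \<le> - c1 * x powr p" if "y - 2 * pi * of_int k \<in> {\<alpha>0..\<beta>}" for y k
  proof -
    define z where "z = y - 2 * pi * of_int k"
    have "S y = S (z + 2 * pi * of_int k)" by (simp add: z_def)
    also have "\<dots> = S z" by (rule per_int[OF S_per])
    finally have "S y = S z" .
    moreover have "S z \<le> - c1 * (pi - z) powr p" using S_right that \<beta> by (auto simp: z_def)
    moreover have "x powr p \<le> (pi - z) powr p"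
      using that pq x by (intro powr_mono2) (auto simp: z_def \<beta>_def)
    hence "c1 * x powr p \<le> c1 * (pi - z) powr p" using cs by (intro mult_left_mono) auto
    ultimately show ?thesis by linarith
  qed
  have Spos: "S y \<ge> c1 * x powr p" if "y - 2 * pi * of_int k \<in> {-\<beta>..-\<alpha>0}" for y k
  proof -
    define z where "z = y - 2 * pi * of_int k"
    have "S y = S (z + 2 * pi * of_int k)" by (simp add: z_def)
    also have "\<dots> = S z" by (rule per_int[OF S_per])
    finally have "S y = S z" .
    moreover have "S z \<ge> c1 * (z + pi) powr p" using S_left that \<beta> by (auto simp: z_def)
    moreover have "x powr p \<le> (z + pi) powr p"
      using that pq x by (intro powr_mono2) (auto simp: z_def \<beta>_def)
    hence "c1 * x powr p \<le> c1 * (z + pi) powr p" using cs by (intro mult_left_mono) auto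
    ultimately show ?thesis by linarith
  qed
  have velneg: "V i t < 0" if "R t > c3 * R0 / 2" "\<theta> i t - 2 * pi * of_int k \<in> {\<alpha>0..\<beta>}" for i t k
  proof -
    have "c3 * R0 / 2 > 0" using cs R0 by simp
    hence Rt: "R t > 0" using that(1) by linarith
    have s: "S (\<theta> i t) \<le> - c1 * x powr p" by (rule Sneg[OF that(2)])
    have "\<kappa> * R t * S (\<theta> i t) \<le> \<kappa> * R t * (- c1 * x powr p)"
      using s \<kappa> Rt by (intro mult_left_mono) auto
    moreover have "(\<kappa> * c1 * x powr p) * R t > (\<kappa> * c1 * x powr p) * (c3 * R0 / 2)"
      using that(1) \<kappa> cs Xp by (intro mult_strict_left_mono) auto
    moreover have "K * x powr p = (\<kappa> * c1 * x powr p) * (c3 * R0 / 2)" by (simp add: K_def algebra_simps)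
    moreover have "\<kappa> * R t * (- c1 * x powr p) = - ((\<kappa> * c1 * x powr p) * R t)" by (simp add: algebra_simps)
    moreover have "V i t = \<omega> i + \<kappa> * R t * S (\<theta> i t)" by (rule VR)
    moreover have "\<omega> i \<le> M" using \<omega>M[of i] by linarith
    ultimately show ?thesis using x(3) by linarith
  qed
  have velpos: "V i t > 0" if "R t > c3 * R0 / 2" "\<theta> i t - 2 * pi * of_int k \<in> {-\<beta>..-\<alpha>0}" for i t k
  proof -
    have "c3 * R0 / 2 > 0" using cs R0 by simp
    hence Rt: "R t > 0" using that(1) by linarith
    have s: "S (\<theta> i t) \<ge> c1 * x powr p" by (rule Spos[OF that(2)])
    have "\<kappa> * R t * S (\<theta> i t) \<ge> \<kappa> * R t * (c1 * x powr p)"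
      using s \<kappa> Rt by (intro mult_left_mono) auto
    moreover have "(\<kappa> * c1 * x powr p) * R t > (\<kappa> * c1 * x powr p) * (c3 * R0 / 2)"
      using that(1) \<kappa> cs Xp by (intro mult_strict_left_mono) auto
    moreover have "K * x powr p = (\<kappa> * c1 * x powr p) * (c3 * R0 / 2)" by (simp add: K_def algebra_simps)
    moreover have "\<kappa> * R t * (c1 * x powr p) = (\<kappa> * c1 * x powr p) * R t" by (simp add: algebra_simps)
    moreover have "V i t = \<omega> i + \<kappa> * R t * S (\<theta> i t)" by (rule VR)
    moreover have "\<omega> i \<ge> - M" using \<omega>M[of i] by linarith
    ultimately show ?thesis using x(3) by linarith
  qed
  have dershift: "((\<lambda>t. \<theta> i t - c) has_real_derivative V i t) (at t within {ta..})"
    if "0 \<le> ta" "ta \<le> t" for i t ta c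
  proof -
    have "((\<lambda>t. \<theta> i t - c) has_real_derivative V i t - 0) (at t within {0..})"
      by (rule DERIV_diff[OF der DERIV_const]) (use that in simp)
    hence "((\<lambda>t. \<theta> i t - c) has_real_derivative V i t) (at t within {0..})" by simp
    thus ?thesis by (rule DERIV_subset) (use that in auto)
  qed
  have Iper: "I (y - 2 * pi * of_int k) = I y" for y k
    using per_int[OF I_per, of "y - 2 * pi * of_int k" k] by simp
  have Inn: "I y \<ge> 0" for y
  proof -
    obtain k where k: "y - 2 * pi * of_int k \<in> {-pi<..pi}" using reduce by blast
    thus ?thesis using I_bounds[rule_format, of "y - 2 * pi * of_int k"] Iper[of y k] by auto
  qed
  have good: "\<bar>\<theta> j t - 2 * pi * of_int k\<bar> \<le> max \<bar>\<theta> j 0 - 2 * pi * of_int k\<bar> \<alpha>0"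
    if "\<bar>\<theta> j 0 - 2 * pi * of_int k\<bar> < \<beta>" "0 \<le> t" "t \<le> T" and RT: "\<forall>s\<in>{0..<T}. R s > c3 * R0 / 2"
    for j t T k
  proof -
    define m where "m = max \<bar>\<theta> j 0 - 2 * pi * of_int k\<bar> \<alpha>0"
    define \<psi> where "\<psi> s = \<theta> j s - 2 * pi * of_int k" for s
    have m: "\<alpha>0 \<le> m" "m \<le> \<beta>" using that(1) \<beta> by (simp_all add: m_def)
    have d: "(\<psi> has_real_derivative V j s) (at s within {0..})" if "0 \<le> s" for s
    proof -
      have "0 \<le> (0::real)" by simp
      from dershift[OF this that(1), of j "2 * pi * of_int k"] show ?thesis
        unfolding \<psi>_def[abs_def] .
    qed
    have c1: "V j s < 0" if s: "0 \<le> s" "s < T" "\<psi> s = m" for s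
    proof -
      have "R s > c3 * R0 / 2" using RT s by auto
      moreover have "\<theta> j s - 2 * pi * of_int k \<in> {\<alpha>0..\<beta>}" using s(3) m by (simp add: \<psi>_def)
      ultimately show ?thesis by (rule velneg)
    qed
    have c2: "V j s > 0" if s: "0 \<le> s" "s < T" "\<psi> s = - m" for s
    proof -
      have "R s > c3 * R0 / 2" using RT s by auto
      moreover have "\<theta> j s - 2 * pi * of_int k \<in> {-\<beta>..-\<alpha>0}" using s(3) m by (simp add: \<psi>_def)
      ultimately show ?thesis by (rule velpos)
    qed
    have st0: "\<bar>\<psi> 0\<bar> \<le> m" unfolding m_def \<psi>_def by (rule max.cobounded1)
    have st1: "\<psi> 0 \<le> m" using st0 by (simp add: abs_le_iff)
    have st2: "\<psi> 0 \<ge> - m" using st0 by (simp add: abs_le_iff)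
    have "\<psi> t \<le> m" by (rule barrier_up[OF d st1 c1 that(2) that(3)])
    moreover have "\<psi> t \<ge> - m" by (rule barrier_down[OF d st2 c2 that(2) that(3)])
    ultimately show ?thesis unfolding \<psi>_def m_def by (simp add: abs_le_iff)
  qed
  have P: "I (\<theta> j t) \<ge> c3 * (I (\<theta> j 0) - c2 * x powr q)"
    if "0 \<le> t" "t \<le> T" "\<forall>s\<in>{0..<T}. R s > c3 * R0 / 2" for j t T
  proof -
    obtain k where k: "\<theta> j 0 - 2 * pi * of_int k \<in> {-pi<..pi}" using reduce by blast
    define y0 where "y0 = \<theta> j 0 - 2 * pi * of_int k"
    show ?thesis
    proof (cases "\<bar>y0\<bar> < \<beta>")
      case True
      have hb: "\<bar>\<theta> j t - 2 * pi * of_int k\<bar> \<le> max \<bar>y0\<bar> \<alpha>0"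
        using good[where j=j and k=k and t=t and T=T] True that by (simp add: y0_def)
      have y0r: "y0 \<in> {-pi..pi}" using k by (simp add: y0_def)
      have "I (\<theta> j t - 2 * pi * of_int k) \<ge> c3 * I y0"
        by (rule I_min[rule_format, OF y0r hb])
      hence "I (\<theta> j t) \<ge> c3 * I (\<theta> j 0)" using Iper by (simp add: y0_def)
      moreover have "c3 * (c2 * x powr q) \<ge> 0" using cs x by simp
      ultimately show ?thesis by (simp add: algebra_simps)
    next
      case False
      have "I y0 \<le> c2 * (pi - \<bar>y0\<bar>) powr q" using I_bounds k by (auto simp: y0_def)
      also have "\<dots> \<le> c2 * x powr q"
        using False k cs pq by (intro mult_left_mono powr_mono2) (auto simp: y0_def \<beta>_def)
      finally have "I (\<theta> j 0) \<le> c2 * x powr q" using Iper by (simp add: y0_def)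
      hence "c3 * (I (\<theta> j 0) - c2 * x powr q) \<le> 0" using cs by (simp add: mult_nonneg_nonpos)
      thus ?thesis using Inn[of "\<theta> j t"] by linarith
    qed
  qed
  define Rlow where "Rlow = c3 * (R0 - c2 * x powr q)"
  have Rlow: "Rlow > c3 * R0 / 2"
  proof -
    have "c3 * (R0 / 2) < c3 * (R0 - c2 * x powr q)" using xq cs by (intro mult_strict_left_mono) auto
    thus ?thesis by (simp add: Rlow_def)
  qed
  have G: "R t \<ge> Rlow" if "0 \<le> t" "t \<le> T" "\<forall>s\<in>{0..<T}. R s > c3 * R0 / 2" for t T
  proof -
    have "(\<Sum>j\<in>UNIV. c3 * (I (\<theta> j 0) - c2 * x powr q)) \<le> (\<Sum>j\<in>UNIV. I (\<theta> j t))"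
      using P[OF that] by (intro sum_mono) auto
    moreover have "(\<Sum>j\<in>UNIV. c3 * (I (\<theta> j 0) - c2 * x powr q))
        = c3 * ((\<Sum>j\<in>UNIV. I (\<theta> j 0)) - N * (c2 * x powr q))"
      by (simp add: sum_distrib_left[symmetric] sum_subtractf N_def)
    ultimately have "c3 * ((\<Sum>j\<in>UNIV. I (\<theta> j 0)) - N * (c2 * x powr q)) / N \<le> R t"
      using N by (simp add: R_def divide_right_mono)
    moreover have "c3 * ((\<Sum>j\<in>UNIV. I (\<theta> j 0)) - N * (c2 * x powr q)) / N = Rlow"
      using N by (simp add: Rlow_def R0_def R_def field_simps)
    ultimately show ?thesis by simp
  qed
  have Icont: "continuous_on UNIV I" using I_lip lipschitz_on_continuous_on by blast
  have \<theta>cont: "continuous_on {0..} (\<theta> j)" for j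
    unfolding continuous_on_eq_continuous_within using der DERIV_continuous by fastforce
  have Rcont: "continuous_on {0..} R"
  proof -
    have "continuous_on {0..} (\<lambda>t. I (\<theta> j t))" for j
      by (rule continuous_on_compose2[OF Icont \<theta>cont]) auto
    hence "continuous_on {0..} (\<lambda>t. (\<Sum>j\<in>UNIV. I (\<theta> j t)))"
      by (intro continuous_on_sum) auto
    thus ?thesis unfolding R_def using N by (intro continuous_on_divide continuous_on_const) auto
  qed
  have partA: "\<forall>t\<ge>0. R t > c3 * R0 / 2"
  proof (rule ccontr)
    assume "\<not> (\<forall>t\<ge>0. R t > c3 * R0 / 2)"
    then obtain t0 where t0: "t0 \<ge> 0" "R t0 \<le> c3 * R0 / 2" by auto
    define A where "A = {0..} \<inter> R -` {..c3 * R0 / 2}"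
    have clA: "closed A" unfolding A_def by (rule continuous_closed_preimage[OF Rcont]) auto
    have neA: "A \<noteq> {}" using t0 by (auto simp: A_def)
    have bdd: "bdd_below A" unfolding A_def by (rule bdd_belowI[of _ 0]) auto
    define t1 where "t1 = Inf A"
    have t1A: "t1 \<in> A" unfolding t1_def using closed_contains_Inf[OF neA bdd clA] .
    have before: "\<forall>s\<in>{0..<t1}. R s > c3 * R0 / 2"
    proof
      fix s assume s: "s \<in> {0..<t1}"
      show "R s > c3 * R0 / 2"
      proof (rule ccontr)
        assume "\<not> R s > c3 * R0 / 2"
        hence "s \<in> A" using s by (auto simp: A_def)
        hence "t1 \<le> s" unfolding t1_def using bdd by (rule cInf_lower)
        thus False using s by simp
      qed
    qed
    have "R t1 \<ge> Rlow" using G[of t1 t1] before t1A by (auto simp: A_def)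
    thus False using Rlow t1A by (auto simp: A_def)
  qed
  have partB: "\<exists>a L. L < 2 * pi \<and> (\<forall>t\<ge>0. \<theta> i t \<in> {a..a+L})" for i
  proof -
    have Rall: "\<forall>s\<in>{0..<T}. R s > c3 * R0 / 2" for T using partA by auto
    obtain k where k: "\<theta> i 0 - 2 * pi * of_int k \<in> {-pi<..pi}" using reduce by blast
    define y0 where "y0 = \<theta> i 0 - 2 * pi * of_int k"
    show ?thesis
    proof (cases "\<bar>y0\<bar> < \<beta>")
      case True
      define m where "m = max \<bar>y0\<bar> \<alpha>0"
      have mpi: "m < pi" using True \<beta> \<alpha>0 by (simp add: m_def)
      have "\<theta> i t \<in> {2 * pi * of_int k - m .. 2 * pi * of_int k - m + 2 * m}" if "t \<ge> 0" for t
      proof -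
        have hb: "\<bar>\<theta> i t - 2 * pi * of_int k\<bar> \<le> m"
          using good[where j=i and k=k and t=t and T=t, OF _ that order_refl Rall] True
          by (simp add: y0_def m_def)
        hence "- m \<le> \<theta> i t - 2 * pi * of_int k" "\<theta> i t - 2 * pi * of_int k \<le> m"
          by (simp_all add: abs_le_iff)
        thus ?thesis unfolding atLeastAtMost_iff by (intro conjI) linarith+
      qed
      thus ?thesis using mpi by (intro exI[of _ "2 * pi * of_int k - m"] exI[of _ "2 * m"]) auto
    next
      case False
      obtain k' where k': "\<theta> i 0 - 2 * pi * of_int k' \<in> {\<beta>..2 * pi - \<beta>}"
      proof (cases "y0 \<ge> \<beta>")
        case True
        have "y0 \<le> pi" using k by (simp add: y0_def)
        hence "\<theta> i 0 - 2 * pi * of_int k \<in> {\<beta>..2 * pi - \<beta>}" using True \<beta> by (simp add: y0_def)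
        thus ?thesis by (rule that)
      next
        case False': False
        hence y: "y0 \<le> - \<beta>" using False by auto
        have y2: "- pi < y0" using k by (simp add: y0_def)
        have e: "\<theta> i 0 - 2 * pi * of_int (k - 1) = y0 + 2 * pi" by (simp add: y0_def algebra_simps)
        have "\<theta> i 0 - 2 * pi * of_int (k - 1) \<in> {\<beta>..2 * pi - \<beta>}"
          unfolding e atLeastAtMost_iff using y y2 \<beta> by (intro conjI) linarith+
        thus ?thesis by (rule that)
      qed
      define z where "z t = \<theta> i t - 2 * pi * of_int k'" for t
      have zder: "(z has_real_derivative V i t) (at t within {ta..})" if "0 \<le> ta" "ta \<le> t" for t ta
        unfolding z_def[abs_def] using dershift[OF that] .
      have Rt: "R t > c3 * R0 / 2" if "t \<ge> 0" for t using partA that by auto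
      have cr1: "V i t > 0" if "t \<ge> 0" "z t = - \<alpha>0" for t
      proof -
        have "\<theta> i t - 2 * pi * of_int k' \<in> {-\<beta>..-\<alpha>0}" using that(2) \<beta> by (simp add: z_def)
        thus ?thesis by (rule velpos[OF Rt[OF that(1)]])
      qed
      have cr2: "V i t < 0" if "t \<ge> 0" "z t = 2 * pi + \<alpha>0" for t
      proof -
        have "\<theta> i t - 2 * pi * of_int (k' + 1) = z t - 2 * pi" by (simp add: z_def algebra_simps)
        hence "\<theta> i t - 2 * pi * of_int (k' + 1) \<in> {\<alpha>0..\<beta>}" using that(2) \<beta> by simp
        thus ?thesis by (rule velneg[OF Rt[OF that(1)]])
      qed
      have cr3: "V i t < 0" if "t \<ge> 0" "z t = \<beta>" for t
      proof -
        have "\<theta> i t - 2 * pi * of_int k' \<in> {\<alpha>0..\<beta>}" using that(2) \<beta> by (simp add: z_def)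
        thus ?thesis by (rule velneg[OF Rt[OF that(1)]])
      qed
      have cr4: "V i t > 0" if "t \<ge> 0" "z t = 2 * pi - \<beta>" for t
      proof -
        have "\<theta> i t - 2 * pi * of_int (k' + 1) = z t - 2 * pi" by (simp add: z_def algebra_simps)
        hence "\<theta> i t - 2 * pi * of_int (k' + 1) \<in> {-\<beta>..-\<alpha>0}" using that(2) \<beta> by simp
        thus ?thesis by (rule velpos[OF Rt[OF that(1)]])
      qed
      have z0: "\<beta> \<le> z 0" "z 0 \<le> 2 * pi - \<beta>" using k' by (simp_all add: z_def)
      have zd0: "(z has_real_derivative V i s) (at s within {0..})" if "0 \<le> s" for s
        using zder[OF order_refl that] .
      have lower: "z t \<ge> - \<alpha>0" if "t \<ge> 0" for t
      proof -
        have st: "z 0 \<ge> - \<alpha>0" using z0 \<beta> \<alpha>0 by linarith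
        have cr: "V i s > 0" if "0 \<le> s" "s < t" "z s = - \<alpha>0" for s using cr1[OF that(1) that(3)] .
        show ?thesis by (rule barrier_down[OF zd0 st cr that order_refl])
      qed
      have upper: "z t \<le> 2 * pi + \<alpha>0" if "t \<ge> 0" for t
      proof -
        have st: "z 0 \<le> 2 * pi + \<alpha>0" using z0 \<beta> \<alpha>0 by linarith
        have cr: "V i s < 0" if "0 \<le> s" "s < t" "z s = 2 * pi + \<alpha>0" for s using cr2[OF that(1) that(3)] .
        show ?thesis by (rule barrier_up[OF zd0 st cr that order_refl])
      qed
      have th: "\<theta> i t = z t + 2 * pi * of_int k'" for t by (simp add: z_def)
      show ?thesis
      proof (cases "\<exists>t1\<ge>0. z t1 < \<beta>")
        case True
        then obtain t1 where t1: "t1 \<ge> 0" "z t1 < \<beta>" by auto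
        have zb: "z t \<le> 2 * pi - \<beta>" if "t \<ge> 0" for t
        proof (cases "t1 \<le> t")
          case True
          have st: "z t1 \<le> \<beta>" using t1 by simp
          have cr: "V i s < 0" if "t1 \<le> s" "s < t" "z s = \<beta>" for s
            using cr3[OF _ that(3)] that(1) t1(1) by simp
          have "z t \<le> \<beta>" by (rule barrier_up[OF zder[OF t1(1)] st cr True order_refl])
          thus ?thesis using \<beta> by simp
        next
          case False
          show ?thesis
          proof (rule ccontr)
            assume "\<not> z t \<le> 2 * pi - \<beta>"
            hence st: "z t \<ge> 2 * pi - \<beta>" by simp
            have cr: "V i s > 0" if "t \<le> s" "s < t1" "z s = 2 * pi - \<beta>" for s
              using cr4[OF _ that(3)] that(1) \<open>t \<ge> 0\<close> by simp
            have tt: "t \<le> t1" using False by simp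
            have "z t1 \<ge> 2 * pi - \<beta>" by (rule barrier_down[OF zder[OF \<open>t \<ge> 0\<close>] st cr tt order_refl])
            thus False using t1 \<beta> by simp
          qed
        qed
        have "\<theta> i t \<in> {2 * pi * of_int k' - \<alpha>0 .. 2 * pi * of_int k' - \<alpha>0 + (2 * pi - \<beta> + \<alpha>0)}"
          if "t \<ge> 0" for t
          unfolding atLeastAtMost_iff th[of t] using zb[OF that] lower[OF that] by (intro conjI) linarith+
        thus ?thesis using \<beta> by (intro exI[of _ "2 * pi * of_int k' - \<alpha>0"] exI[of _ "2 * pi - \<beta> + \<alpha>0"]) auto
      next
        case False
        have zl: "\<beta> \<le> z t" if "t \<ge> 0" for t
        proof (rule ccontr)
          assume "\<not> \<beta> \<le> z t"
          hence "z t < \<beta>" by simp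
          thus False using False that by blast
        qed
        have "\<theta> i t \<in> {2 * pi * of_int k' + \<beta> .. 2 * pi * of_int k' + \<beta> + (2 * pi + \<alpha>0 - \<beta>)}"
          if "t \<ge> 0" for t
          unfolding atLeastAtMost_iff th[of t] using zl[OF that] upper[OF that] by (intro conjI) linarith+
        thus ?thesis using \<beta> by (intro exI[of _ "2 * pi * of_int k' + \<beta>"] exI[of _ "2 * pi + \<alpha>0 - \<beta>"]) auto
      qed
    qed
  qed
  have A: "\<forall>t\<ge>0. (\<Sum>j\<in>UNIV. I (\<theta> j t)) / real CARD('n)
                 > c3 * ((\<Sum>j\<in>UNIV. I (\<theta> j 0)) / real CARD('n)) / 2"
  proof (intro allI impI)
    fix t :: real assume "t \<ge> 0"
    hence "R t > c3 * R0 / 2" using partA by blast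
    thus "(\<Sum>j\<in>UNIV. I (\<theta> j t)) / real CARD('n) > c3 * ((\<Sum>j\<in>UNIV. I (\<theta> j 0)) / real CARD('n)) / 2"
      unfolding R_def R0_def N_def .
  qed
  have B: "\<forall>i. bdd_above (\<theta> i ` {0..}) \<and> bdd_below (\<theta> i ` {0..})
              \<and> (SUP t\<in>{0..}. \<theta> i t) - (INF t\<in>{0..}. \<theta> i t) < 2 * pi"
  proof
    fix i
    obtain a L where h: "L < 2 * pi" "\<forall>t\<ge>0. \<theta> i t \<in> {a..a+L}" using partB by blast
    show "bdd_above (\<theta> i ` {0..}) \<and> bdd_below (\<theta> i ` {0..})
              \<and> (SUP t\<in>{0..}. \<theta> i t) - (INF t\<in>{0..}. \<theta> i t) < 2 * pi"
      by (rule range_conc[OF h(2) h(1)])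
  qed
  show ?thesis by (rule conjI[OF A B])
qed

end
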